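(* Let $(X,d)$ be a metric space and $\ell:X\to[0,+\infty]$ a lower semicontinuous function satisfying hypothesis $(H_0)$. Then there is a lower semicontinuous function $u:X\to\mathbb{R}\cup\{+\infty\}$ with $\inf_Xu=0$ and $G[u](x)=\ell(x)$ for all $x\in X$.
   Context: Global slope: for $u:X\to\mathbb{R}\cup\{+\infty\}$, $G[u](x)=\sup_{y\neq x}\frac{(u(x)-u(y))_+}{d(x,y)}$ if $u(x)<+\infty$ and $G[u](x)=+\infty$ otherwise ($\alpha_+=\max\{\alpha,0\}$). Hypothesis $(H_0)$: there is a sequence $\{\bar x_n\}_n\subset X$ with $\sum_{n=0}^\infty\ell(\bar x_n)d(\bar x_n,\bar x_{n+1})<+\infty$ and $\lim_{n\to\infty}\ell(\bar x_n)=0$. *)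

theory Defs
  imports "HOL-Analysis.Analysis"
begin

definition lsc :: "('a::topological_space \<Rightarrow> ereal) \<Rightarrow> bool" where
  "lsc f \<longleftrightarrow> (\<forall>t. open {x. t < f x})"

text \<open>The supremum is taken over the nonnegative quantities
  (u x - u y)_+ / d(x,y), y \<noteq> x; we include 0 so that the supremum over an empty
  index set (one-point space) is 0 rather than -\<infinity>.\<close>
definition global_slope :: "('a::metric_space \<Rightarrow> ereal) \<Rightarrow> 'a \<Rightarrow> ereal" where
  "global_slope u x =
     (if u x < \<infinity>
      then Sup ({0} \<union> {max (u x - u y) 0 / ereal (dist x y) | y. y \<noteq> x})
      else \<infinity>)"

definition H0 :: "('a::metric_space \<Rightarrow> ereal) \<Rightarrow> bool" where
  "H0 l \<longleftrightarrow> (\<exists>xb :: nat \<Rightarrow> 'a.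
      (\<Sum>n. l (xb n) * ereal (dist (xb n) (xb (Suc n)))) < \<infinity> \<and>
      (\<lambda>n. l (xb n)) \<longlonglongrightarrow> 0)"

end

theory Submission
  imports Defs
begin

definition trm :: "('a::metric_space \<Rightarrow> ereal) \<Rightarrow> (nat \<Rightarrow> 'a) \<Rightarrow> nat \<Rightarrow> ereal" where
  "trm l s n = l (s n) * ereal (dist (s n) (s (Suc n)))"

definition cst :: "('a::metric_space \<Rightarrow> ereal) \<Rightarrow> (nat \<Rightarrow> 'a) \<Rightarrow> ereal" where
  "cst l s = (\<Sum>n. trm l s n)"

definition chs :: "('a::metric_space \<Rightarrow> ereal) \<Rightarrow> 'a \<Rightarrow> (nat \<Rightarrow> 'a) set" where
  "chs l x = {s. s 0 = x \<and> (\<lambda>n. l (s n)) \<longlonglongrightarrow> 0}"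

definition uu :: "('a::metric_space \<Rightarrow> ereal) \<Rightarrow> 'a \<Rightarrow> ereal" where
  "uu l x = (INF s\<in>chs l x. cst l s)"

definition vv :: "('a::metric_space \<Rightarrow> ereal) \<Rightarrow> 'a \<Rightarrow> ereal" where
  "vv l x = (SUP r\<in>{0<..}. INF y\<in>ball x r. uu l y)"

lemma trm_nonneg: "(\<And>x. l x \<ge> 0) \<Longrightarrow> 0 \<le> trm l s n"
  unfolding trm_def by simp

lemma cst_nonneg: "(\<And>x. l x \<ge> 0) \<Longrightarrow> 0 \<le> cst l s"
  unfolding cst_def by (rule suminf_0_le) (rule trm_nonneg)

lemma uu_nonneg: "(\<And>x. l x \<ge> 0) \<Longrightarrow> 0 \<le> uu l x"
  unfolding uu_def by (rule INF_greatest) (rule cst_nonneg)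

lemma ereal_suminf_offset:
  fixes f :: "nat \<Rightarrow> ereal"
  assumes "\<And>n. 0 \<le> f n"
  shows "suminf f = (\<Sum>j. f (j + i)) + (\<Sum>j<i. f j)"
proof -
  define g where "g n = e2ennreal (f n)" for n
  have fg: "f = (\<lambda>n. enn2ereal (g n))" using assms unfolding g_def by (simp add: enn2ereal_e2ennreal)
  have "suminf g = (\<Sum>j. g (j + i)) + (\<Sum>j<i. g j)" by (rule suminf_offset) (rule summableI)
  then have "enn2ereal (suminf g) = enn2ereal (\<Sum>j. g (j + i)) + enn2ereal (\<Sum>j<i. g j)"
    by (simp add: plus_ennreal.rep_eq)
  then show ?thesis unfolding fg by simp
qed

lemma cst_split:
  assumes "\<And>x. l x \<ge> 0"
  shows "cst l s = cst l (\<lambda>j. s (j + m)) + (\<Sum>j<m. trm l s j)"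
proof -
  have "cst l s = (\<Sum>j. trm l s (j + m)) + (\<Sum>j<m. trm l s j)"
  proof -
    have sm: "summable (\<lambda>j. trm l s (j + m))"
      by (rule summable_ereal_pos) (rule trm_nonneg[where l=l, OF assms])
    show ?thesis unfolding cst_def by (rule ereal_suminf_offset) (rule trm_nonneg[where l=l, OF assms])
  qed
  moreover have "(\<lambda>j. trm l s (j + m)) = trm l (\<lambda>j. s (j + m))"
    by (auto simp: trm_def)
  ultimately show ?thesis by (simp add: cst_def)
qed

lemma chs_shift: "s \<in> chs l x \<Longrightarrow> (\<lambda>j. s (j + m)) \<in> chs l (s m)"
  unfolding chs_def using LIMSEQ_ignore_initial_segment[of "\<lambda>n. l (s n)" 0 m] by auto

lemma cst_ge:
  assumes "\<And>x. l x \<ge> 0" "s \<in> chs l x"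
  shows "(\<Sum>j<m. trm l s j) + uu l (s m) \<le> cst l s"
proof -
  have "uu l (s m) \<le> cst l (\<lambda>j. s (j + m))"
    unfolding uu_def by (rule INF_lower) (rule chs_shift[OF assms(2)])
  then have "(\<Sum>j<m. trm l s j) + uu l (s m) \<le> (\<Sum>j<m. trm l s j) + cst l (\<lambda>j. s (j + m))"
    by (rule add_left_mono)
  also have "\<dots> = cst l s" using cst_split[where l=l and s=s and m=m, OF assms(1)] by (simp add: add.commute)
  finally show ?thesis .
qed

lemma prepend:
  assumes "\<And>x. l x \<ge> 0" "s \<in> chs l y"
  shows "(\<lambda>n. if n = 0 then x else s (n - 1)) \<in> chs l x"
    and "cst l (\<lambda>n. if n = 0 then x else s (n - 1)) = l x * ereal (dist x y) + cst l s"
proof -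
  let ?s = "\<lambda>n. if n = 0 then x else s (n - 1)"
  have "(\<lambda>n. l (?s (Suc n))) \<longlonglongrightarrow> 0" using assms(2) by (simp add: chs_def)
  then show "?s \<in> chs l x" unfolding chs_def using filterlim_sequentially_Suc[of "\<lambda>n. l (?s n)"] by simp
  have "cst l ?s = cst l (\<lambda>j. ?s (j + 1)) + (\<Sum>j<1. trm l ?s j)"
    by (rule cst_split[where l=l, OF assms(1)])
  also have "(\<lambda>j. ?s (j + 1)) = s" by auto
  also have "(\<Sum>j<1. trm l ?s j) = l x * ereal (dist x y)"
    using assms(2) by (simp add: trm_def chs_def)
  finally show "cst l ?s = l x * ereal (dist x y) + cst l s" by (simp add: add.commute)
qed

lemma uu_tri:
  assumes "\<And>x. l x \<ge> 0"
  shows "uu l x \<le> l x * ereal (dist x y) + uu l y"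
proof (cases "chs l y = {}")
  case True
  then have "uu l y = \<infinity>" by (simp add: uu_def top_ereal_def)
  moreover have "l x * ereal (dist x y) \<ge> 0" using assms by simp
  ultimately show ?thesis by simp
next
  case False
  have "uu l x \<le> (INF s\<in>chs l y. l x * ereal (dist x y) + cst l s)"
  proof (rule INF_greatest)
    fix s assume "s \<in> chs l y"
    then have "uu l x \<le> cst l (\<lambda>n. if n = 0 then x else s (n - 1))"
      unfolding uu_def by (intro INF_lower prepend[OF assms])
    then show "uu l x \<le> l x * ereal (dist x y) + cst l s" using prepend(2)[OF assms \<open>s \<in> _\<close>] by simp
  qed
  also have "\<dots> = l x * ereal (dist x y) + uu l y"
    unfolding uu_def using assms False
    by (intro INF_ereal_add_right) (auto intro: cst_nonneg)
  finally show ?thesis .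
qed

lemma exit_bound:
  assumes "\<And>x. l x \<ge> 0" "a \<ge> 0" "\<And>i. i < m \<Longrightarrow> l (s i) \<ge> ereal a"
  shows "ereal (a * dist (s 0) (s m)) \<le> (\<Sum>j<m. trm l s j)"
  using assms(3)
proof (induction m)
  case 0
  then show ?case by simp
next
  case (Suc m)
  have IH: "ereal (a * dist (s 0) (s m)) \<le> (\<Sum>j<m. trm l s j)" using Suc by auto
  have "ereal (a * dist (s m) (s (Suc m))) = ereal a * ereal (dist (s m) (s (Suc m)))" by simp
  also have "\<dots> \<le> trm l s m" unfolding trm_def
    by (rule ereal_mult_right_mono) (use Suc in auto)
  finally have "ereal (a * dist (s 0) (s m)) + ereal (a * dist (s m) (s (Suc m))) \<le> (\<Sum>j<m. trm l s j) + trm l s m"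
    using IH by (metis add_mono)
  then have "ereal (a * dist (s 0) (s m)) + ereal (a * dist (s m) (s (Suc m))) \<le> (\<Sum>j<Suc m. trm l s j)"
    by simp
  moreover have "a * dist (s 0) (s (Suc m)) \<le> a * (dist (s 0) (s m) + dist (s m) (s (Suc m)))"
    by (rule mult_left_mono[OF dist_triangle assms(2)])
  then have "ereal (a * dist (s 0) (s (Suc m))) \<le> ereal (a * dist (s 0) (s m)) + ereal (a * dist (s m) (s (Suc m)))"
    by (simp add: distrib_left)
  ultimately show ?case by (rule order_trans[rotated])
qed

lemma h0_facts:
  assumes nn: "\<And>x. l x \<ge> 0" and h: "H0 l"
  shows "\<exists>x0. uu l x0 < \<infinity>" and "\<And>e. e > 0 \<Longrightarrow> \<exists>x. uu l x < ereal e"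
proof -
  obtain xb where sm: "(\<Sum>n. l (xb n) * ereal (dist (xb n) (xb (Suc n)))) < \<infinity>"
    and lim: "(\<lambda>n. l (xb n)) \<longlonglongrightarrow> 0"
    using h unfolding H0_def by blast
  have cfin: "cst l xb < \<infinity>" using sm by (simp add: cst_def trm_def)
  have ch: "xb \<in> chs l (xb 0)" using lim by (simp add: chs_def)
  have "uu l (xb 0) \<le> cst l xb" unfolding uu_def by (rule INF_lower[OF ch])
  then show "\<exists>x0. uu l x0 < \<infinity>" using cfin by (meson le_less_trans)
  fix e :: real assume e: "e > 0"
  define g where "g n = real_of_ereal (trm l xb n)" for n
  have tnn: "\<And>n. 0 \<le> trm l xb n" by (rule trm_nonneg[OF nn])
  have sg: "summable g" unfolding g_def
    by (rule summable_real_of_ereal) (use tnn cfin in \<open>auto simp: cst_def\<close>)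
  have tfin: "trm l xb n \<noteq> \<infinity>" for n
    by (rule suminf_PInfty[OF tnn]) (use cfin in \<open>auto simp: cst_def\<close>)
  have teq: "trm l xb n = ereal (g n)" for n
    using tnn[of n] tfin[of n] unfolding g_def by (cases "trm l xb n") auto
  obtain N where N: "\<forall>n\<ge>N. norm (\<Sum>i. g (i + n)) < e"
    using suminf_exist_split[OF e sg] by blast
  have "uu l (xb N) \<le> cst l (\<lambda>j. xb (j + N))"
    unfolding uu_def by (rule INF_lower) (rule chs_shift[OF ch])
  also have "trm l (\<lambda>j. xb (j + N)) = (\<lambda>j. ereal (g (j + N)))"
    by (rule ext) (simp add: teq[symmetric] trm_def)
  then have "cst l (\<lambda>j. xb (j + N)) = (\<Sum>j. ereal (g (j + N)))"
    unfolding cst_def by simp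
  also have "\<dots> = ereal (\<Sum>j. g (j + N))"
    by (rule suminf_ereal'[OF summable_ignore_initial_segment[OF sg]])
  also have "\<dots> < ereal e" using N by auto
  finally show "\<exists>x. uu l x < ereal e" by blast
qed

lemma vv_le_uu: "vv l x \<le> uu l x"
  unfolding vv_def
proof (rule SUP_least)
  fix r :: real assume "r \<in> {0<..}"
  then show "(INF y\<in>ball x r. uu l y) \<le> uu l x" by (intro INF_lower) auto
qed

lemma vv_nonneg: "(\<And>x. l x \<ge> 0) \<Longrightarrow> 0 \<le> vv l x"
  unfolding vv_def
  by (rule SUP_upper2[of 1]) (auto intro: INF_greatest uu_nonneg)

lemma uu_fin:
  assumes nn: "\<And>x. l x \<ge> 0" and h: "H0 l" and lx: "l x \<noteq> \<infinity>"
  shows "uu l x \<noteq> \<infinity>"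
proof -
  obtain x0 where x0: "uu l x0 < \<infinity>" using h0_facts(1)[OF nn h] by blast
  have "uu l x \<le> l x * ereal (dist x x0) + uu l x0" by (rule uu_tri[OF nn])
  moreover have "l x * ereal (dist x x0) \<noteq> \<infinity>" using lx nn[of x] by (cases "l x") auto
  moreover have "uu l x0 \<noteq> \<infinity>" using x0 by auto
  ultimately show ?thesis using nn[of x] uu_nonneg[where l=l, OF nn, of x0]
    by (cases "l x * ereal (dist x x0)"; cases "uu l x0") auto
qed

lemma vv_lb:
  assumes nn: "\<And>x. l x \<ge> 0" and lx: "l x \<noteq> \<infinity>" and ux: "uu l x \<noteq> \<infinity>"
  shows "uu l x \<le> l x * ereal (dist x y) + vv l y"
proof -
  obtain c where c: "l x = ereal c" using lx nn[of x] by (cases "l x") auto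
  obtain U where U: "uu l x = ereal U" using ux uu_nonneg[where l=l, OF nn, of x] by (cases "uu l x") auto
  have c0: "c \<ge> 0" using nn[of x] c by simp
  show ?thesis
  proof (cases "vv l y = \<infinity>")
    case True then show ?thesis using c by simp
  next
    case False
    then obtain V where V: "vv l y = ereal V" using vv_nonneg[where l=l, OF nn, of y] by (cases "vv l y") auto
    let ?d = "dist x y"
    have "U \<le> c * ?d + V"
    proof (rule ccontr)
      assume "\<not> ?thesis"
      then have lt: "V < U - c * ?d" by simp
      define w where "w = (V + (U - c * ?d)) / 2"
      have w1: "V < w" and w2: "w < U - c * ?d" using lt by (auto simp: w_def)
      define r where "r = (U - c * ?d - w) / (c + 1)"
      have r0: "r > 0" using w2 c0 by (simp add: r_def)
      have cr: "c * r \<le> U - c * ?d - w"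
      proof -
        have "c * r \<le> (c + 1) * r" using r0 by simp
        also have "\<dots> = U - c * ?d - w" using c0 by (simp add: r_def)
        finally show ?thesis .
      qed
      have "ereal w \<le> (INF z\<in>ball y r. uu l z)"
      proof (rule INF_greatest)
        fix z assume z: "z \<in> ball y r"
        have tri: "uu l x \<le> l x * ereal (dist x z) + uu l z" by (rule uu_tri[OF nn])
        show "ereal w \<le> uu l z"
        proof (cases "uu l z")
          case (real Z)
          have "U \<le> c * dist x z + Z" using tri c U real by simp
          moreover have "dist x z \<le> ?d + r" using z dist_triangle[of x z y]
            by (simp add: dist_commute)
          then have "c * dist x z \<le> c * (?d + r)" using c0 by (rule mult_left_mono)
          ultimately have "w \<le> Z" using cr by (simp add: distrib_left)
          then show ?thesis using real by simp
        next
          case PInf then show ?thesis by simp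
        next
          case MInf then show ?thesis using uu_nonneg[where l=l, OF nn, of z] by simp
        qed
      qed
      also have "\<dots> \<le> vv l y" unfolding vv_def by (rule SUP_upper) (use r0 in auto)
      finally show False using V w1 by simp
    qed
    then show ?thesis using c U V by simp
  qed
qed

lemma vv_lsc: "lsc (vv l)"
  unfolding lsc_def
proof
  fix t
  show "open {x. t < vv l x}"
    unfolding open_contains_ball
  proof
    fix x assume "x \<in> {x. t < vv l x}"
    then obtain r where r: "r > 0" "t < (INF y\<in>ball x r. uu l y)"
      unfolding vv_def less_SUP_iff by auto
    have "ball x r \<subseteq> {x. t < vv l x}"
    proof
      fix x' assume x': "x' \<in> ball x r"
      define r' where "r' = r - dist x x'"
      have r'0: "r' > 0" using x' by (simp add: r'_def)
      have "ball x' r' \<subseteq> ball x r"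
      proof
        fix z assume "z \<in> ball x' r'"
        then have "dist x' z < r - dist x x'" by (simp add: r'_def)
        moreover have "dist x z \<le> dist x x' + dist x' z" by (rule dist_triangle)
        ultimately show "z \<in> ball x r" by simp
      qed
      then have "(INF y\<in>ball x r. uu l y) \<le> (INF y\<in>ball x' r'. uu l y)"
        by (rule INF_superset_mono) auto
      also have "\<dots> \<le> vv l x'" unfolding vv_def by (rule SUP_upper) (use r'0 in auto)
      finally show "x' \<in> {x. t < vv l x}" using r(2) by auto
    qed
    then show "\<exists>e>0. ball x e \<subseteq> {x. t < vv l x}" using r(1) by blast
  qed
qed

lemma slope_lower:
  assumes nn: "\<And>x. l x \<ge> 0" and ls: "lsc l"
    and vx: "vv l x = ereal X" and b0: "0 < b" and bl: "ereal b < l x"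
  shows "\<exists>z. z \<noteq> x \<and> ereal b \<le> max (vv l x - vv l z) 0 / ereal (dist x z)"
proof -
  obtain M where bM: "b < M" and Ml: "ereal M < l x"
  proof (cases "l x")
    case (real c)
    show ?thesis by (rule that[of "(b + c) / 2"]) (use bl real in auto)
  next
    case PInf
    show ?thesis by (rule that[of "b + 1"]) (use PInf in auto)
  next
    case MInf
    then show ?thesis using nn[of x] by simp
  qed
  have M0: "M > 0" using b0 bM by simp
  have "open {y. ereal M < l y}" using ls unfolding lsc_def by blast
  moreover have "x \<in> {y. ereal M < l y}" using Ml by simp
  ultimately obtain r where r0: "r > 0" and rb: "ball x r \<subseteq> {y. ereal M < l y}"
    unfolding open_contains_ball by blast
  define k where "k = (M - b) / (2 * (M + 1))"
  have k0: "k > 0" using bM M0 by (simp add: k_def)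
  have kM: "(M + 1) * k = (M - b) / 2" using M0 by (simp add: k_def field_simps)
  define \<delta> where "\<delta> = k * r"
  have d0: "\<delta> > 0" using k0 r0 by (simp add: \<delta>_def)
  have "(INF y\<in>ball x \<delta>. uu l y) \<le> vv l x" unfolding vv_def
    by (rule SUP_upper) (use d0 in auto)
  also have "\<dots> < ereal (X + \<delta>)" using vx d0 by simp
  finally obtain y where y: "y \<in> ball x \<delta>" and uy: "uu l y < ereal (X + \<delta>)"
    unfolding INF_less_iff by blast
  then obtain s where s: "s \<in> chs l y" and cs: "cst l s < ereal (X + \<delta>)"
    unfolding uu_def INF_less_iff by blast
  have s0: "s 0 = y" and slim: "(\<lambda>n. l (s n)) \<longlonglongrightarrow> 0" using s by (auto simp: chs_def)
  have "eventually (\<lambda>n. l (s n) < ereal M) sequentially"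
    by (rule order_tendstoD(2)[OF slim]) (use M0 in simp)
  then obtain N where "l (s N) < ereal M" by (auto simp: eventually_sequentially)
  then have exN: "s N \<notin> ball x r" using rb by auto
  define m where "m = (LEAST n. s n \<notin> ball x r)"
  have zout: "s m \<notin> ball x r" unfolding m_def by (rule LeastI[of _ N]) (rule exN)
  have inb: "s i \<in> ball x r" if "i < m" for i
    using not_less_Least[of i "\<lambda>n. s n \<notin> ball x r"] that unfolding m_def by blast
  have lM: "ereal M \<le> l (s i)" if "i < m" for i
    using inb[OF that] rb by (auto intro: less_imp_le)
  define z where "z = s m"
  have eb: "ereal (M * dist y z) \<le> (\<Sum>j<m. trm l s j)"
    using exit_bound[where l=l, OF nn, of M m s] M0 lM s0 by (simp add: z_def)
  have "(\<Sum>j<m. trm l s j) + uu l z \<le> cst l s"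
    unfolding z_def by (rule cst_ge[where l=l, OF nn s])
  then have "ereal (M * dist y z) + vv l z \<le> cst l s"
    using eb vv_le_uu[of l z] by (meson add_mono order_trans)
  then have lt: "ereal (M * dist y z) + vv l z < ereal (X + \<delta>)" using cs by simp
  then have "vv l z \<noteq> \<infinity>" by auto
  then obtain Z where vz: "vv l z = ereal Z" using vv_nonneg[where l=l, OF nn, of z]
    by (cases "vv l z") auto
  have lt2: "M * dist y z + Z < X + \<delta>" using lt vz by simp
  define D where "D = dist x z"
  have rD: "r \<le> D" using zout by (simp add: D_def z_def)
  have D0: "D > 0" using rD r0 by simp
  have xy: "dist x y < \<delta>" using y by simp
  have "D \<le> dist x y + dist y z" unfolding D_def by (rule dist_triangle)
  then have "D - \<delta> \<le> dist y z" using xy by simp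
  then have m1: "M * (D - \<delta>) \<le> M * dist y z" using M0 by (intro mult_left_mono) auto
  have "(M + 1) * \<delta> \<le> (M + 1) * k * D"
    unfolding \<delta>_def using rD k0 M0 by (simp add: mult.assoc mult_left_mono)
  then have m2: "(M + 1) * \<delta> \<le> (M - b) / 2 * D" using kM by simp
  have "X - Z > M * D - (M + 1) * \<delta>" using lt2 m1 by (simp add: algebra_simps)
  then have "X - Z > M * D - (M - b) / 2 * D" using m2 by simp
  moreover have "M * D - (M - b) / 2 * D \<ge> b * D"
  proof -
    have "M * D - (M - b) / 2 * D = ((M + b) / 2) * D" by (simp add: field_simps)
    moreover have "b * D \<le> ((M + b) / 2) * D" using bM D0 by (intro mult_right_mono) auto
    ultimately show ?thesis by simp
  qed
  ultimately have XZ: "b * D < X - Z" by simp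
  then have "b \<le> max (X - Z) 0 / D" using D0 by (simp add: le_divide_eq)
  moreover have "max (vv l x - vv l z) 0 / ereal (dist x z) = ereal (max (X - Z) 0 / D)"
    using vx vz D0 by (simp add: D_def max_def)
  ultimately have "ereal b \<le> max (vv l x - vv l z) 0 / ereal (dist x z)" by simp
  moreover have "z \<noteq> x" using D0 by (auto simp: D_def)
  ultimately show ?thesis by blast
qed

theorem proposition6p9:
  fixes l :: "'a::metric_space \<Rightarrow> ereal"
  assumes "\<And>x. l x \<ge> 0"
    and "lsc l"
    and "H0 l"
  shows "\<exists>u :: 'a \<Rightarrow> ereal. (\<forall>x. u x \<noteq> -\<infinity>) \<and> lsc u \<and>
           (INF x. u x) = 0 \<and> (\<forall>x. global_slope u x = l x)"
proof (intro exI[of _ "vv l"] conjI allI)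
  note nn = assms(1)
  fix x
  show "vv l x \<noteq> -\<infinity>" using vv_nonneg[where l=l, OF nn, of x] by auto
next
  show "lsc (vv l)" by (rule vv_lsc)
next
  note nn = assms(1)
  show "(INF x. vv l x) = 0"
  proof (rule antisym)
    show "0 \<le> (INF x. vv l x)" by (rule INF_greatest) (rule vv_nonneg[where l=l, OF nn])
    show "(INF x. vv l x) \<le> 0"
    proof (rule ereal_le_epsilon2)
      fix e :: real assume "0 < e"
      then obtain y where "uu l y < ereal e" using h0_facts(2)[where l=l, OF nn assms(3)] by blast
      then have "(INF x. vv l x) \<le> ereal e"
        using vv_le_uu[of l y] by (meson INF_lower UNIV_I less_imp_le order_trans)
      then show "(INF x. vv l x) \<le> 0 + ereal e" by simp
    qed
  qed
next
  note nn = assms(1)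
  fix x
  show "global_slope (vv l) x = l x"
  proof (cases "vv l x < \<infinity>")
    case False
    have "l x = \<infinity>"
    proof (rule ccontr)
      assume "l x \<noteq> \<infinity>"
      then have "uu l x \<noteq> \<infinity>" by (rule uu_fin[where l=l, OF nn assms(3)])
      then have "vv l x < \<infinity>" using vv_le_uu[of l x] by (cases "uu l x"; cases "vv l x") auto
      then show False using False by simp
    qed
    then show ?thesis using False by (simp add: global_slope_def)
  next
    case True
    obtain X where vx: "vv l x = ereal X" using True vv_nonneg[where l=l, OF nn, of x]
      by (cases "vv l x") auto
    let ?S = "{0} \<union> {max (vv l x - vv l y) 0 / ereal (dist x y) | y. y \<noteq> x}"
    have "Sup ?S = l x"
    proof (rule antisym)
      show "Sup ?S \<le> l x"
      proof (rule Sup_least)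
        fix t assume "t \<in> ?S"
        then consider "t = 0" | y where "y \<noteq> x" "t = max (vv l x - vv l y) 0 / ereal (dist x y)"
          by blast
        then show "t \<le> l x"
        proof cases
          case 1 then show ?thesis using nn[of x] by simp
        next
          case (2 y)
          show ?thesis
          proof (cases "l x = \<infinity>")
            case True then show ?thesis by simp
          next
            case False
            obtain c where c: "l x = ereal c" using False nn[of x] by (cases "l x") auto
            have ux: "uu l x \<noteq> \<infinity>" by (rule uu_fin[where l=l, OF nn assms(3) False])
            have "vv l x \<le> l x * ereal (dist x y) + vv l y"
              using vv_lb[where l=l, OF nn False ux, of y] vv_le_uu[of l x] by simp
            have d0: "dist x y > 0" using 2 by simp
            show ?thesis
            proof (cases "vv l y")
              case PInf then show ?thesis using 2 vx nn[of x] by simp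
            next
              case MInf then show ?thesis using vv_nonneg[where l=l, OF nn, of y] by simp
            next
              case (real Y)
              have "X \<le> c * dist x y + Y"
                using \<open>vv l x \<le> _\<close> vx real c by simp
              then have "max (X - Y) 0 / dist x y \<le> c"
                using d0 nn[of x] c by (simp add: divide_le_eq mult.commute)
              moreover have "max (vv l x - vv l y) 0 / ereal (dist x y) = ereal (max (X - Y) 0 / dist x y)"
                using vx real d0 by (simp add: max_def)
              ultimately show ?thesis using 2 c by simp
            qed
          qed
        qed
      qed
    next
      show "l x \<le> Sup ?S"
      proof (rule dense_le)
        fix b assume bl: "b < l x"
        show "b \<le> Sup ?S"
        proof (cases "b \<le> 0")
          case True
          have "0 \<le> Sup ?S" by (rule Sup_upper) simp
          then show ?thesis using True by (meson order_trans)
        next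
          case False
          then obtain b' where b': "b = ereal b'" "0 < b'" using bl
            by (cases b) auto
          obtain z where "z \<noteq> x" "ereal b' \<le> max (vv l x - vv l z) 0 / ereal (dist x z)"
            using slope_lower[where l=l, OF nn assms(2) vx b'(2)] bl b'(1) by blast
          then show ?thesis using b'(1) by (intro Sup_upper2) auto
        qed
      qed
    qed
    then show ?thesis using True by (simp add: global_slope_def)
  qed
qed

end
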